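(* Let $E$ be a JB$^*$-triple in which tripotents are norm-total, and let $T:E\to E$ be a bounded linear map. The following are equivalent: (a) $T$ is a triple derivation; (b) for each tripotent $e\in E$, the map $(P_0(e)+P_2(e))T|_{E_0(e)\oplus E_2(e)}:E_0(e)\oplus E_2(e)\to E_0(e)\oplus E_2(e)$ is a triple derivation of the JB$^*$-subtriple $E_0(e)\oplus E_2(e)$; (c) for each tripotent $e\in E$, the map $P_2(e)T|_{E_2(e)}:E_2(e)\to E_2(e)$ is a triple derivation of $E_2(e)$ and $P_0(e)T(e)=0$.
   Context: A JB$^*$-triple is a complex Banach space $E$ with a continuous triple product $\{\cdot,\cdot,\cdot\}$, bilinear and symmetric in the outer variables and conjugate-linear in the middle one, satisfying the Jordan identity $L(a,b)L(x,y)=L(x,y)L(a,b)+L(L(a,b)x,y)-L(x,L(b,a)y)$, such that $L(a,a)$ is hermitian with non-negative spectrum and $\|\{a,a,a\}\|=\|a\|^3$, where $L(a,b)x=\{a,b,x\}$. Elements $a,b$ are orthogonal ($a\perp b$) if $L(a,b)=0$. A tripotent is $e\in E$ with $\{e,e,e\}=e$; it induces the Peirce decomposition $E=E_2(e)\oplus E_1(e)\oplus E_0(e)$, $E_j(e)=\{x:\{e,e,x\}=\tfrac j2 x\}$, with Peirce projections $P_j(e)$ onto $E_j(e)$; each $E_j(e)$ and $E_0(e)\oplus E_2(e)$ are JB$^*$-subtriples. Tripotents are norm-total in $E$ if every element of $E$ is a norm limit of finite linear combinations of mutually orthogonal tripotents. A linear map $\delta$ is a triple derivation if $\delta\{a,b,c\}=\{\delta(a),b,c\}+\{a,\delta(b),c\}+\{a,b,\delta(c)\}$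 for all $a,b,c$. *)

theory Defs
  imports "HOL-Analysis.Analysis"
begin

text \<open>A complex Banach space is modelled as a real Banach space 'a together with a
  real-linear map J (multiplication by the imaginary unit) with J (J x) = -x, such that
  the resulting complex scalar multiplication is absolutely homogeneous.\<close>

definition cscale :: "('a::real_vector \<Rightarrow> 'a) \<Rightarrow> complex \<Rightarrow> 'a \<Rightarrow> 'a" where
  "cscale J c x = Re c *\<^sub>R x + Im c *\<^sub>R J x"

definition complex_structure :: "('a::real_normed_vector \<Rightarrow> 'a) \<Rightarrow> bool" where
  "complex_structure J \<longleftrightarrow> linear J \<and> (\<forall>x. J (J x) = - x)
     \<and> (\<forall>c x. norm (cscale J c x) = cmod c * norm x)"

definition clin :: "('a::real_vector \<Rightarrow> 'a) \<Rightarrow> ('a \<Rightarrow> 'a) \<Rightarrow> bool" where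
  "clin J f \<longleftrightarrow> (\<forall>x y. f (x + y) = f x + f y) \<and> (\<forall>c x. f (cscale J c x) = cscale J c (f x))"

definition conjlin :: "('a::real_vector \<Rightarrow> 'a) \<Rightarrow> ('a \<Rightarrow> 'a) \<Rightarrow> bool" where
  "conjlin J f \<longleftrightarrow> (\<forall>x y. f (x + y) = f x + f y) \<and> (\<forall>c x. f (cscale J c x) = cscale J (cnj c) (f x))"

definition cstate :: "('a::real_normed_vector \<Rightarrow> 'a) \<Rightarrow> ('a \<Rightarrow> complex) \<Rightarrow> bool" where
  "cstate J f \<longleftrightarrow> bounded_linear f \<and> (\<forall>c x. f (cscale J c x) = c * f x) \<and> onorm f = 1"

definition num_range :: "('a::real_normed_vector \<Rightarrow> 'a) \<Rightarrow> ('a \<Rightarrow> 'a) \<Rightarrow> complex set" where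
  "num_range J T = {f (T x) | f x. norm x = 1 \<and> cstate J f \<and> f x = 1}"

definition hermitian :: "('a::real_normed_vector \<Rightarrow> 'a) \<Rightarrow> ('a \<Rightarrow> 'a) \<Rightarrow> bool" where
  "hermitian J T \<longleftrightarrow> bounded_linear T \<and> clin J T \<and> num_range J T \<subseteq> \<real>"

definition op_spectrum :: "('a::real_normed_vector \<Rightarrow> 'a) \<Rightarrow> ('a \<Rightarrow> 'a) \<Rightarrow> complex set" where
  "op_spectrum J T = {l. \<not> bij (\<lambda>x. T x - cscale J l x)}"

definition JBstar_triple :: "('a::banach \<Rightarrow> 'a) \<Rightarrow> ('a \<Rightarrow> 'a \<Rightarrow> 'a \<Rightarrow> 'a) \<Rightarrow> bool" where
  "JBstar_triple J tp \<longleftrightarrow>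
     complex_structure J
   \<and> (\<forall>b c. clin J (\<lambda>a. tp a b c))
   \<and> (\<forall>a c. conjlin J (\<lambda>b. tp a b c))
   \<and> (\<forall>a b c. tp a b c = tp c b a)
   \<and> continuous_on UNIV (\<lambda>(a, b, c). tp a b c)
   \<and> (\<forall>a b x y z. tp a b (tp x y z) = tp x y (tp a b z) + tp (tp a b x) y z - tp x (tp b a y) z)
   \<and> (\<forall>a. hermitian J (\<lambda>x. tp a a x))
   \<and> (\<forall>a. \<forall>l\<in>op_spectrum J (\<lambda>x. tp a a x). Im l = 0 \<and> Re l \<ge> 0)
   \<and> (\<forall>a. norm (tp a a a) = norm a ^ 3)"

definition tripotent :: "('a \<Rightarrow> 'a \<Rightarrow> 'a \<Rightarrow> 'a) \<Rightarrow> 'a \<Rightarrow> bool" where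
  "tripotent tp e \<longleftrightarrow> tp e e e = e"

definition orth :: "('a \<Rightarrow> 'a \<Rightarrow> 'a \<Rightarrow> 'a::zero) \<Rightarrow> 'a \<Rightarrow> 'a \<Rightarrow> bool" where
  "orth tp a b \<longleftrightarrow> (\<forall>z. tp a b z = 0)"

definition peirce_space :: "('a \<Rightarrow> 'a \<Rightarrow> 'a \<Rightarrow> 'a::real_vector) \<Rightarrow> nat \<Rightarrow> 'a \<Rightarrow> 'a set" where
  "peirce_space tp j e = {x. tp e e x = (real j / 2) *\<^sub>R x}"

text \<open>Peirce projections, via the standard formulas with Q(e)x = {e,x,e}:
  P_2 = Q(e)^2, P_1 = 2(L(e,e) - Q(e)^2), P_0 = Id - 2L(e,e) + Q(e)^2.\<close>
definition peirce_proj :: "('a \<Rightarrow> 'a \<Rightarrow> 'a \<Rightarrow> 'a::real_vector) \<Rightarrow> nat \<Rightarrow> 'a \<Rightarrow> 'a \<Rightarrow> 'a" where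
  "peirce_proj tp j e x =
     (if j = 2 then tp e (tp e x e) e
      else if j = 1 then 2 *\<^sub>R (tp e e x - tp e (tp e x e) e)
      else x - 2 *\<^sub>R tp e e x + tp e (tp e x e) e)"

definition norm_total_tripotents :: "('a::banach \<Rightarrow> 'a) \<Rightarrow> ('a \<Rightarrow> 'a \<Rightarrow> 'a \<Rightarrow> 'a) \<Rightarrow> bool" where
  "norm_total_tripotents J tp \<longleftrightarrow>
     UNIV \<subseteq> closure {(\<Sum>i\<in>F. cscale J (c i) (e i)) | F c e.
        finite (F :: nat set) \<and> (\<forall>i\<in>F. tripotent tp (e i))
        \<and> (\<forall>i\<in>F. \<forall>k\<in>F. i \<noteq> k \<longrightarrow> orth tp (e i) (e k))}"

definition triple_derivation_on :: "('a::real_vector \<Rightarrow> 'a) \<Rightarrow> ('a \<Rightarrow> 'a \<Rightarrow> 'a \<Rightarrow> 'a) \<Rightarrow> 'a set \<Rightarrow> ('a \<Rightarrow> 'a) \<Rightarrow> bool" where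
  "triple_derivation_on J tp S D \<longleftrightarrow>
     (\<forall>x\<in>S. D x \<in> S)
   \<and> (\<forall>x\<in>S. \<forall>y\<in>S. D (x + y) = D x + D y)
   \<and> (\<forall>c. \<forall>x\<in>S. D (cscale J c x) = cscale J c (D x))
   \<and> (\<forall>a\<in>S. \<forall>b\<in>S. \<forall>c\<in>S. D (tp a b c) = tp (D a) b c + tp a (D b) c + tp a b (D c))"

end

theory Submission
  imports Defs
begin



declare One_nat_def [simp del]

locale jbt =
  fixes J :: "'a::banach \<Rightarrow> 'a" and tp :: "'a \<Rightarrow> 'a \<Rightarrow> 'a \<Rightarrow> 'a"
  assumes jb: "JBstar_triple J tp"
begin

lemma J_lin: "linear J" using jb unfolding JBstar_triple_def complex_structure_def by blast
lemma JJ: "J (J x) = - x" using jb unfolding JBstar_triple_def complex_structure_def by blast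
lemma cl1: "clin J (\<lambda>a. tp a b c)" using jb unfolding JBstar_triple_def by blast
lemma cj2: "conjlin J (\<lambda>b. tp a b c)" using jb unfolding JBstar_triple_def by blast
lemma tsym: "tp a b c = tp c b a" using jb unfolding JBstar_triple_def by blast
lemma JI: "tp a b (tp x y z) = tp x y (tp a b z) + tp (tp a b x) y z - tp x (tp b a y) z"
  using jb unfolding JBstar_triple_def by blast
lemma tcont: "continuous_on UNIV (\<lambda>(a, b, c). tp a b c)"
  using jb unfolding JBstar_triple_def by blast

lemma three_sc: "(v::'b::real_vector) + 2 *\<^sub>R v = 3 *\<^sub>R v" "2 *\<^sub>R v + v = 3 *\<^sub>R v"
proof -
  have "(3::real) = 1 + 2" by simp
  then show "v + 2 *\<^sub>R v = 3 *\<^sub>R v" "2 *\<^sub>R v + v = 3 *\<^sub>R v" by (metis scaleR_left_distrib scaleR_one add.commute)+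
qed

lemma v3: "(v::'b::real_vector) + (v + v) = 3 *\<^sub>R v"
proof -
  have "(3::real) = 1 + (1 + 1)" by simp
  then show ?thesis by (metis scaleR_left_distrib scaleR_one)
qed

lemmas sdist = scaleR_left_diff_distrib[symmetric] scaleR_left_distrib[symmetric]

lemma cscale_real: "cscale J (complex_of_real r) x = r *\<^sub>R x" by (simp add: cscale_def)

lemma add1: "tp (x + y) b c = tp x b c + tp y b c" using cl1 unfolding clin_def by blast
lemma scale1: "tp (r *\<^sub>R x) b c = r *\<^sub>R tp x b c"
  using cl1[of b c] unfolding clin_def by (metis cscale_real)
lemma add2: "tp a (x + y) c = tp a x c + tp a y c" using cj2 unfolding conjlin_def by blast
lemma scale2: "tp a (r *\<^sub>R x) c = r *\<^sub>R tp a x c"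
  using cj2[of a c] unfolding conjlin_def by (metis cscale_real complex_cnj_complex_of_real)
lemma add3: "tp a b (x + y) = tp a b x + tp a b y" by (metis tsym add1)
lemma scale3: "tp a b (r *\<^sub>R x) = r *\<^sub>R tp a b x" by (metis tsym scale1)

lemma lin1: "linear (\<lambda>a. tp a b c)" by (rule linearI) (simp_all add: add1 scale1)
lemma lin2: "linear (\<lambda>x. tp a x c)" by (rule linearI) (simp_all add: add2 scale2)
lemma lin3: "linear (\<lambda>x. tp a b x)" by (rule linearI) (simp_all add: add3 scale3)

lemmas tpl = add1 add2 add3 scale1 scale2 scale3
  linear_diff[OF lin1] linear_diff[OF lin2] linear_diff[OF lin3]
  linear_neg[OF lin1] linear_neg[OF lin2] linear_neg[OF lin3]
  linear_0[OF lin1] linear_0[OF lin2] linear_0[OF lin3]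

lemma tpJ1: "tp (J x) b c = J (tp x b c)"
proof -
  have "cscale J \<i> y = J y" for y by (simp add: cscale_def)
  then show ?thesis using cl1[of b c] unfolding clin_def by metis
qed
lemma tpJ2: "tp a (J x) c = - J (tp a x c)"
proof -
  have "cscale J \<i> y = J y" for y by (simp add: cscale_def)
  moreover have "cscale J (- \<i>) y = - J y" for y by (simp add: cscale_def)
  ultimately show ?thesis using cj2[of a c] unfolding conjlin_def by (metis complex_cnj_i)
qed
lemma tpJ3: "tp a b (J x) = J (tp a b x)" by (metis tsym tpJ1)

lemma J_zero: "J x = 0 \<Longrightarrow> x = 0" by (metis JJ J_lin linear_0 neg_equal_0_iff_equal)

end


context jbt begin

lemma I2: assumes "tripotent tp e"
  shows "tp e (tp e w e) e = 2 *\<^sub>R tp e e (tp e e w) - tp e e w"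
proof -
  have e: "tp e e e = e" using assms by (simp add: tripotent_def)
  have "tp w e (tp e e e) = tp e e (tp w e e) + tp (tp w e e) e e - tp e (tp e w e) e" by (rule JI)
  moreover have "tp w e e = tp e e w" by (rule tsym)
  moreover have "tp (tp e e w) e e = tp e e (tp e e w)" by (rule tsym)
  ultimately show ?thesis using e by (simp add: algebra_simps scaleR_2)
qed

lemma QL_LQ: assumes "tripotent tp e"
  shows "tp e (tp e e w) e = tp e w e \<and> tp e e (tp e w e) = tp e w e"
proof -
  have e: "tp e e e = e" using assms by (simp add: tripotent_def)
  have a: "tp e w (tp e e e) = tp e e (tp e w e) + tp (tp e w e) e e - tp e (tp w e e) e" by (rule JI)
  have b: "tp e e (tp e w e) = tp e w (tp e e e) + tp (tp e e e) w e - tp e (tp e e w) e" by (rule JI)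
  have s1: "tp (tp e w e) e e = tp e e (tp e w e)" by (rule tsym)
  have s2: "tp w e e = tp e e w" by (rule tsym)
  from a s1 s2 e have a': "tp e w e = tp e e (tp e w e) + tp e e (tp e w e) - tp e (tp e e w) e" by simp
  from b e have b': "tp e e (tp e w e) = tp e w e + tp e w e - tp e (tp e e w) e" by simp
  from a' b' have "tp e w e = (tp e w e + tp e w e - tp e (tp e e w) e) + (tp e w e + tp e w e - tp e (tp e e w) e) - tp e (tp e e w) e"
    by simp
  then have "tp e (tp e e w) e + (tp e (tp e e w) e + tp e (tp e e w) e) = tp e w e + (tp e w e + tp e w e)"
    by (auto simp: algebra_simps)
  then have "3 *\<^sub>R tp e (tp e e w) e = 3 *\<^sub>R tp e w e" by (simp only: v3)
  then have c: "tp e (tp e e w) e = tp e w e" by simp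
  with b' show ?thesis by simp
qed

lemma QL: "tripotent tp e \<Longrightarrow> tp e (tp e e w) e = tp e w e" using QL_LQ by blast
lemma LQ: "tripotent tp e \<Longrightarrow> tp e e (tp e w e) = tp e w e" using QL_LQ by blast

lemma cubic: assumes "tripotent tp e"
  shows "2 *\<^sub>R tp e e (tp e e (tp e e w)) = 3 *\<^sub>R tp e e (tp e e w) - tp e e w"
proof -
  have "tp e e (tp e (tp e w e) e) = tp e (tp e w e) e" using LQ[OF assms] by blast
  then have h: "tp e e (2 *\<^sub>R tp e e (tp e e w) - tp e e w) = 2 *\<^sub>R tp e e (tp e e w) - tp e e w"
    using I2[OF assms] by simp
  have "tp e e (2 *\<^sub>R tp e e (tp e e w) - tp e e w) = 2 *\<^sub>R tp e e (tp e e (tp e e w)) - tp e e (tp e e w)"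
    by (simp add: tpl)
  with h have "2 *\<^sub>R tp e e (tp e e (tp e e w)) = 2 *\<^sub>R tp e e (tp e e w) + tp e e (tp e e w) - tp e e w"
    by (simp add: algebra_simps)
  also have "2 *\<^sub>R tp e e (tp e e w) + tp e e (tp e e w) = 3 *\<^sub>R tp e e (tp e e w)" by (rule three_sc(2))
  finally show ?thesis .
qed

lemma eig_zero: assumes "tripotent tp e" "tp e e x = l *\<^sub>R x" "l \<noteq> 0" "l \<noteq> 1/2" "l \<noteq> 1"
  shows "x = 0"
proof -
  have h: "2 *\<^sub>R (l *\<^sub>R (l *\<^sub>R (l *\<^sub>R x))) = 3 *\<^sub>R (l *\<^sub>R (l *\<^sub>R x)) - l *\<^sub>R x"
    using cubic[OF assms(1), of x] assms(2) by (simp add: tpl mult.assoc)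
  have "(2 * l^3) *\<^sub>R x = 2 *\<^sub>R (l *\<^sub>R (l *\<^sub>R (l *\<^sub>R x)))" by (simp add: power3_eq_cube)
  also have "\<dots> = 3 *\<^sub>R (l *\<^sub>R (l *\<^sub>R x)) - l *\<^sub>R x" by (rule h)
  also have "\<dots> = (3 * l^2 - l) *\<^sub>R x" by (simp add: power2_eq_square scaleR_left_diff_distrib)
  finally have "(2 * l^3) *\<^sub>R x - (3 * l^2 - l) *\<^sub>R x = 0" by simp
  then have "(2 * l^3 - (3 * l^2 - l)) *\<^sub>R x = 0" by (simp only: scaleR_left_diff_distrib)
  moreover have "2 * l^3 - (3 * l^2 - l) \<noteq> 0"
  proof -
    have "2 * l^3 - (3 * l^2 - l) = l * (2*l - 1) * (l - 1)" by (simp add: algebra_simps power3_eq_cube power2_eq_square)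
    moreover have "2*l - 1 \<noteq> 0" using assms(4) by auto
    ultimately show ?thesis using assms by auto
  qed
  ultimately show ?thesis by simp
qed

lemma pp2: "peirce_proj tp 2 e x = tp e (tp e x e) e" by (simp add: peirce_proj_def)
lemma pp1: "peirce_proj tp 1 e x = 2 *\<^sub>R (tp e e x - tp e (tp e x e) e)" by (simp add: peirce_proj_def)
lemma pp0: "peirce_proj tp 0 e x = x - 2 *\<^sub>R tp e e x + tp e (tp e x e) e" by (simp add: peirce_proj_def)

lemma decomp: "peirce_proj tp 0 e x + peirce_proj tp 1 e x + peirce_proj tp 2 e x = x"
  unfolding pp0 pp1 pp2 by (simp add: algebra_simps scaleR_2)

lemma pp2_I2: "tripotent tp e \<Longrightarrow> peirce_proj tp 2 e x = 2 *\<^sub>R tp e e (tp e e x) - tp e e x"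
  unfolding pp2 by (rule I2)
lemma pp1_I2: assumes t: "tripotent tp e" shows "peirce_proj tp 1 e x = 4 *\<^sub>R tp e e x - 4 *\<^sub>R tp e e (tp e e x)"
proof -
  have "peirce_proj tp 1 e x = 2 *\<^sub>R (tp e e x - (2 *\<^sub>R tp e e (tp e e x) - tp e e x))"
    unfolding pp1 I2[OF t] ..
  also have "tp e e x - (2 *\<^sub>R tp e e (tp e e x) - tp e e x) = 2 *\<^sub>R tp e e x - 2 *\<^sub>R tp e e (tp e e x)"
    by (simp add: algebra_simps scaleR_2)
  also have "2 *\<^sub>R (2 *\<^sub>R tp e e x - 2 *\<^sub>R tp e e (tp e e x)) = 4 *\<^sub>R tp e e x - 4 *\<^sub>R tp e e (tp e e x)"
    by (simp add: scaleR_right_diff_distrib)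
  finally show ?thesis .
qed
lemma pp0_I2: "tripotent tp e \<Longrightarrow> peirce_proj tp 0 e x = x - 3 *\<^sub>R tp e e x + 2 *\<^sub>R tp e e (tp e e x)"
proof -
  assume t: "tripotent tp e"
  have "peirce_proj tp 0 e x = x - 2 *\<^sub>R tp e e x + (2 *\<^sub>R tp e e (tp e e x) - tp e e x)"
    unfolding pp0 using I2[OF t] by simp
  also have "\<dots> = x - (2 *\<^sub>R tp e e x + tp e e x) + 2 *\<^sub>R tp e e (tp e e x)" by (simp add: algebra_simps)
  also have "2 *\<^sub>R tp e e x + tp e e x = 3 *\<^sub>R tp e e x" by (rule three_sc(2))
  finally show ?thesis .
qed

lemma pp_on_eig: assumes "tripotent tp e" "tp e e x = l *\<^sub>R x"
  shows "peirce_proj tp 2 e x = (2*l^2 - l) *\<^sub>R x"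
    "peirce_proj tp 1 e x = (4*l - 4*l^2) *\<^sub>R x"
    "peirce_proj tp 0 e x = (1 - 3*l + 2*l^2) *\<^sub>R x"
proof -
  show "peirce_proj tp 2 e x = (2*l^2 - l) *\<^sub>R x"
    unfolding pp2_I2[OF assms(1)] using assms(2) by (simp add: tpl sdist power2_eq_square)
  show "peirce_proj tp 1 e x = (4*l - 4*l^2) *\<^sub>R x"
    unfolding pp1_I2[OF assms(1)] using assms(2) by (simp add: tpl sdist power2_eq_square)
  have "peirce_proj tp 0 e x = 1 *\<^sub>R x - 3 *\<^sub>R (l *\<^sub>R x) + 2 *\<^sub>R (l *\<^sub>R (l *\<^sub>R x))"
    unfolding pp0_I2[OF assms(1)] using assms(2) by (simp add: tpl)
  then show "peirce_proj tp 0 e x = (1 - 3*l + 2*l^2) *\<^sub>R x"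
    by (simp only: scaleR_scaleR sdist power2_eq_square)
qed

lemma pp_eig: assumes "tripotent tp e" "j \<le> 2"
  shows "tp e e (peirce_proj tp j e x) = (real j / 2) *\<^sub>R peirce_proj tp j e x"
proof -
  have c: "2 *\<^sub>R tp e e (tp e e (tp e e x)) = 3 *\<^sub>R tp e e (tp e e x) - tp e e x"
    using cubic[OF assms(1), of x] by simp
  have "j = 0 \<or> j = 1 \<or> j = 2" using assms(2) by auto
  then show ?thesis
  proof (elim disjE)
    assume j: "j = 0"
    have "tp e e (peirce_proj tp 0 e x) = tp e e x - 3 *\<^sub>R tp e e (tp e e x) + 2 *\<^sub>R tp e e (tp e e (tp e e x))"
      unfolding pp0_I2[OF assms(1)] by (simp add: tpl)
    also have "\<dots> = 0" unfolding c by simp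
    finally show ?thesis using j by simp
  next
    assume j: "j = 1"
    have "tp e e (peirce_proj tp 1 e x) = 4 *\<^sub>R tp e e (tp e e x) - 2 *\<^sub>R (2 *\<^sub>R tp e e (tp e e (tp e e x)))"
      unfolding pp1_I2[OF assms(1)] by (simp add: tpl)
    also have "\<dots> = 4 *\<^sub>R tp e e (tp e e x) - 2 *\<^sub>R (3 *\<^sub>R tp e e (tp e e x) - tp e e x)" unfolding c ..
    also have "\<dots> = 4 *\<^sub>R tp e e (tp e e x) - (6 *\<^sub>R tp e e (tp e e x) - 2 *\<^sub>R tp e e x)"
      by (simp add: scaleR_right_diff_distrib)
    also have "\<dots> = (4 *\<^sub>R tp e e (tp e e x) - 6 *\<^sub>R tp e e (tp e e x)) + 2 *\<^sub>R tp e e x"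
      by (simp add: algebra_simps)
    also have "\<dots> = (4 - 6) *\<^sub>R tp e e (tp e e x) + 2 *\<^sub>R tp e e x"
      by (simp only: scaleR_left_diff_distrib)
    also have "\<dots> = (1/2) *\<^sub>R peirce_proj tp 1 e x" unfolding pp1_I2[OF assms(1)] by (simp add: algebra_simps)
    finally show ?thesis using j by simp
  next
    assume j: "j = 2"
    have "tp e e (peirce_proj tp 2 e x) = 2 *\<^sub>R tp e e (tp e e (tp e e x)) - tp e e (tp e e x)"
      unfolding pp2_I2[OF assms(1)] by (simp add: tpl)
    also have "\<dots> = 3 *\<^sub>R tp e e (tp e e x) - tp e e x - tp e e (tp e e x)" unfolding c ..
    also have "\<dots> = (2 *\<^sub>R tp e e (tp e e x) + tp e e (tp e e x)) - tp e e x - tp e e (tp e e x)"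
      by (simp only: three_sc(2))
    also have "\<dots> = peirce_proj tp 2 e x" unfolding pp2_I2[OF assms(1)] by (simp add: algebra_simps)
    finally show ?thesis using j by simp
  qed
qed

lemma arith: assumes "tp e e x = a *\<^sub>R x" "tp e e y = b *\<^sub>R y" "tp e e z = c *\<^sub>R z"
  shows "tp e e (tp x y z) = (a - b + c) *\<^sub>R tp x y z"
proof -
  have "tp e e (tp x y z) = tp x y (tp e e z) + tp (tp e e x) y z - tp x (tp e e y) z" by (rule JI)
  then show ?thesis using assms by (simp add: tpl sdist)
qed

end


context jbt begin

lemma pp_add: "peirce_proj tp j e (x + y) = peirce_proj tp j e x + peirce_proj tp j e y"
  by (simp add: peirce_proj_def tpl algebra_simps)
lemma pp_scale: "peirce_proj tp j e (r *\<^sub>R x) = r *\<^sub>R peirce_proj tp j e x"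
  by (simp add: peirce_proj_def tpl algebra_simps)
lemma pp_linear: "linear (peirce_proj tp j e)" by (rule linearI) (simp_all add: pp_add pp_scale)
lemmas ppl = pp_add pp_scale linear_0[OF pp_linear] linear_diff[OF pp_linear] linear_neg[OF pp_linear]

lemma cs_linear: "linear (cscale J c)"
  by (rule linearI) (simp_all add: cscale_def linear_add[OF J_lin] linear_scale[OF J_lin] algebra_simps)

lemma L_cs: "tp e e (cscale J c x) = cscale J c (tp e e x)"
  using cl1[of e e] tsym unfolding clin_def by metis
lemma Q_cs: "tp e (cscale J c x) e = cscale J (cnj c) (tp e x e)"
  using cj2[of e e] unfolding conjlin_def by metis

lemma pp_cs: assumes "j = 0 \<or> j = 2"
  shows "peirce_proj tp j e (cscale J c x) = cscale J c (peirce_proj tp j e x)"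
  using assms
  by (auto simp: peirce_proj_def L_cs Q_cs linear_diff[OF cs_linear] linear_add[OF cs_linear] linear_scale[OF cs_linear])

lemma R_int: assumes "tripotent tp e" "tp e e v = l *\<^sub>R v" "l = -1 \<or> l = 0 \<or> l = 1 \<or> l = 2"
  shows "peirce_proj tp 0 e v + peirce_proj tp 2 e v = v"
proof (cases "l = 0 \<or> l = 1")
  case True
  then show ?thesis using pp_on_eig[OF assms(1,2)] by (auto simp: sdist)
next
  case False
  then have "v = 0" using eig_zero[OF assms(1,2)] assms(3) by auto
  then show ?thesis by (simp add: ppl)
qed

lemma R_half: assumes "tripotent tp e" "tp e e v = l *\<^sub>R v" "l = -1/2 \<or> l = 1/2 \<or> l = 3/2"
  shows "peirce_proj tp 0 e v + peirce_proj tp 2 e v = 0"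
proof (cases "l = 1/2")
  case True
  have "(1 - 3*l + 2*l^2) + (2*l^2 - l) = 0" unfolding True by (simp add: power2_eq_square)
  then show ?thesis using pp_on_eig[OF assms(1,2)] by (simp only: sdist) simp
next
  case False
  then have "v = 0" using eig_zero[OF assms(1,2)] assms(3) by auto
  then show ?thesis by (simp add: ppl)
qed

lemma P2_one: assumes "tripotent tp e" "tp e e v = v" shows "peirce_proj tp 2 e v = v"
  using pp_on_eig(1)[OF assms(1), of v 1] assms(2) by simp

lemma P2_not1: assumes "tripotent tp e" "tp e e v = l *\<^sub>R v" "l = 0 \<or> l = 1/2 \<or> l = 3/2 \<or> l = 2"
  shows "peirce_proj tp 2 e v = 0"
proof (cases "l = 0 \<or> l = 1/2")
  case True
  then show ?thesis using pp_on_eig[OF assms(1,2)] by (auto simp: power2_eq_square)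
next
  case False
  then have "v = 0" using eig_zero[OF assms(1,2)] assms(3) by auto
  then show ?thesis by (simp add: ppl)
qed

lemma ppe: assumes "tripotent tp e"
  shows "tp e e (peirce_proj tp 0 e y) = 0 *\<^sub>R peirce_proj tp 0 e y"
    "tp e e (peirce_proj tp 1 e y) = (1/2) *\<^sub>R peirce_proj tp 1 e y"
    "tp e e (peirce_proj tp 2 e y) = 1 *\<^sub>R peirce_proj tp 2 e y"
  using pp_eig[OF assms, of 0 y] pp_eig[OF assms, of 1 y] pp_eig[OF assms, of 2 y] by simp_all

lemma split1: "tp y b c = tp (peirce_proj tp 0 e y) b c + tp (peirce_proj tp 1 e y) b c + tp (peirce_proj tp 2 e y) b c"
  using decomp[of e y] by (metis add1)
lemma split2: "tp a y c = tp a (peirce_proj tp 0 e y) c + tp a (peirce_proj tp 1 e y) c + tp a (peirce_proj tp 2 e y) c"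
  using decomp[of e y] by (metis add2)

lemma KL1: assumes t: "tripotent tp e" and b: "tp e e b = \<beta> *\<^sub>R b" and c: "tp e e c = \<gamma> *\<^sub>R c"
  and bg: "\<beta> = 0 \<or> \<beta> = 1" "\<gamma> = 0 \<or> \<gamma> = 1"
  shows "peirce_proj tp 0 e (tp y b c) + peirce_proj tp 2 e (tp y b c)
        = tp (peirce_proj tp 0 e y + peirce_proj tp 2 e y) b c"
proof -
  let ?R = "\<lambda>v. peirce_proj tp 0 e v + peirce_proj tp 2 e v"
  have e0: "tp e e (tp (peirce_proj tp 0 e y) b c) = (0 - \<beta> + \<gamma>) *\<^sub>R tp (peirce_proj tp 0 e y) b c"
    by (rule arith[OF ppe(1)[OF t] b c])
  have e1: "tp e e (tp (peirce_proj tp 1 e y) b c) = (1/2 - \<beta> + \<gamma>) *\<^sub>R tp (peirce_proj tp 1 e y) b c"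
    by (rule arith[OF ppe(2)[OF t] b c])
  have e2: "tp e e (tp (peirce_proj tp 2 e y) b c) = (1 - \<beta> + \<gamma>) *\<^sub>R tp (peirce_proj tp 2 e y) b c"
    by (rule arith[OF ppe(3)[OF t] b c])
  have r0: "?R (tp (peirce_proj tp 0 e y) b c) = tp (peirce_proj tp 0 e y) b c"
    by (rule R_int[OF t e0]) (use bg in auto)
  have r1: "?R (tp (peirce_proj tp 1 e y) b c) = 0"
    by (rule R_half[OF t e1]) (use bg in auto)
  have r2: "?R (tp (peirce_proj tp 2 e y) b c) = tp (peirce_proj tp 2 e y) b c"
    by (rule R_int[OF t e2]) (use bg in auto)
  have "?R (tp y b c) = ?R (tp (peirce_proj tp 0 e y) b c) + ?R (tp (peirce_proj tp 1 e y) b c) + ?R (tp (peirce_proj tp 2 e y) b c)"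
    unfolding split1[of y b c e] by (simp add: ppl algebra_simps)
  also have "\<dots> = tp (peirce_proj tp 0 e y + peirce_proj tp 2 e y) b c" using r0 r1 r2 by (simp add: tpl)
  finally show ?thesis .
qed

lemma KL2: assumes t: "tripotent tp e" and a: "tp e e a = \<alpha> *\<^sub>R a" and c: "tp e e c = \<gamma> *\<^sub>R c"
  and bg: "\<alpha> = 0 \<or> \<alpha> = 1" "\<gamma> = 0 \<or> \<gamma> = 1"
  shows "peirce_proj tp 0 e (tp a y c) + peirce_proj tp 2 e (tp a y c)
        = tp a (peirce_proj tp 0 e y + peirce_proj tp 2 e y) c"
proof -
  let ?R = "\<lambda>v. peirce_proj tp 0 e v + peirce_proj tp 2 e v"
  have e0: "tp e e (tp a (peirce_proj tp 0 e y) c) = (\<alpha> - 0 + \<gamma>) *\<^sub>R tp a (peirce_proj tp 0 e y) c"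
    by (rule arith[OF a ppe(1)[OF t] c])
  have e1: "tp e e (tp a (peirce_proj tp 1 e y) c) = (\<alpha> - 1/2 + \<gamma>) *\<^sub>R tp a (peirce_proj tp 1 e y) c"
    by (rule arith[OF a ppe(2)[OF t] c])
  have e2: "tp e e (tp a (peirce_proj tp 2 e y) c) = (\<alpha> - 1 + \<gamma>) *\<^sub>R tp a (peirce_proj tp 2 e y) c"
    by (rule arith[OF a ppe(3)[OF t] c])
  have r0: "?R (tp a (peirce_proj tp 0 e y) c) = tp a (peirce_proj tp 0 e y) c"
    by (rule R_int[OF t e0]) (use bg in auto)
  have r1: "?R (tp a (peirce_proj tp 1 e y) c) = 0"
    by (rule R_half[OF t e1]) (use bg in auto)
  have r2: "?R (tp a (peirce_proj tp 2 e y) c) = tp a (peirce_proj tp 2 e y) c"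
    by (rule R_int[OF t e2]) (use bg in auto)
  have "?R (tp a y c) = ?R (tp a (peirce_proj tp 0 e y) c) + ?R (tp a (peirce_proj tp 1 e y) c) + ?R (tp a (peirce_proj tp 2 e y) c)"
    unfolding split2[of a y c e] by (simp add: ppl algebra_simps)
  also have "\<dots> = tp a (peirce_proj tp 0 e y + peirce_proj tp 2 e y) c" using r0 r1 r2 by (simp add: tpl)
  finally show ?thesis .
qed

lemma KP1: assumes t: "tripotent tp e" and b: "tp e e b = b" and c: "tp e e c = c"
  shows "peirce_proj tp 2 e (tp y b c) = tp (peirce_proj tp 2 e y) b c"
proof -
  have b': "tp e e b = 1 *\<^sub>R b" and c': "tp e e c = 1 *\<^sub>R c" using b c by simp_all
  have r0: "peirce_proj tp 2 e (tp (peirce_proj tp 0 e y) b c) = 0"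
    by (rule P2_not1[OF t arith[OF ppe(1)[OF t] b' c']]) simp
  have r1: "peirce_proj tp 2 e (tp (peirce_proj tp 1 e y) b c) = 0"
    by (rule P2_not1[OF t arith[OF ppe(2)[OF t] b' c']]) simp
  have r2: "peirce_proj tp 2 e (tp (peirce_proj tp 2 e y) b c) = tp (peirce_proj tp 2 e y) b c"
    using P2_one[OF t] arith[OF ppe(3)[OF t] b' c'] by simp
  have "peirce_proj tp 2 e (tp y b c) = peirce_proj tp 2 e (tp (peirce_proj tp 0 e y) b c)
     + peirce_proj tp 2 e (tp (peirce_proj tp 1 e y) b c) + peirce_proj tp 2 e (tp (peirce_proj tp 2 e y) b c)"
    by (metis split1 pp_add)
  then show ?thesis by (simp add: r0 r1 r2)
qed

lemma KP2: assumes t: "tripotent tp e" and a: "tp e e a = a" and c: "tp e e c = c"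
  shows "peirce_proj tp 2 e (tp a y c) = tp a (peirce_proj tp 2 e y) c"
proof -
  have a': "tp e e a = 1 *\<^sub>R a" and c': "tp e e c = 1 *\<^sub>R c" using a c by simp_all
  have r0: "peirce_proj tp 2 e (tp a (peirce_proj tp 0 e y) c) = 0"
    by (rule P2_not1[OF t arith[OF a' ppe(1)[OF t] c']]) simp
  have r1: "peirce_proj tp 2 e (tp a (peirce_proj tp 1 e y) c) = 0"
    by (rule P2_not1[OF t arith[OF a' ppe(2)[OF t] c']]) simp
  have r2: "peirce_proj tp 2 e (tp a (peirce_proj tp 2 e y) c) = tp a (peirce_proj tp 2 e y) c"
    using P2_one[OF t] arith[OF a' ppe(3)[OF t] c'] by simp
  have "peirce_proj tp 2 e (tp a y c) = peirce_proj tp 2 e (tp a (peirce_proj tp 0 e y) c)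
     + peirce_proj tp 2 e (tp a (peirce_proj tp 1 e y) c) + peirce_proj tp 2 e (tp a (peirce_proj tp 2 e y) c)"
    by (metis split2 pp_add)
  then show ?thesis by (simp add: r0 r1 r2)
qed

end


context jbt begin

definition tder :: "('a \<Rightarrow> 'a) \<Rightarrow> bool" where
  "tder T \<longleftrightarrow> (\<forall>a b c. T (tp a b c) = tp (T a) b c + tp a (T b) c + tp a b (T c))"

lemma tdo_UNIV: assumes "clin J T" shows "triple_derivation_on J tp UNIV T \<longleftrightarrow> tder T"
  using assms unfolding triple_derivation_on_def tder_def clin_def by auto

lemma ps0_iff: "v \<in> peirce_space tp 0 e \<longleftrightarrow> tp e e v = 0 *\<^sub>R v" by (simp add: peirce_space_def)
lemma ps2_iff: "v \<in> peirce_space tp 2 e \<longleftrightarrow> tp e e v = 1 *\<^sub>R v" by (simp add: peirce_space_def)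

definition Rp :: "'a \<Rightarrow> 'a \<Rightarrow> 'a" where
  "Rp e v = peirce_proj tp 0 e v + peirce_proj tp 2 e v"
lemma Rp_add: "Rp e (u + v) = Rp e u + Rp e v" unfolding Rp_def by (simp add: ppl algebra_simps)

lemma KL1S: assumes t: "tripotent tp e"
  and b: "b \<in> {y + z |y z. y \<in> peirce_space tp 0 e \<and> z \<in> peirce_space tp 2 e}"
  and c: "c \<in> {y + z |y z. y \<in> peirce_space tp 0 e \<and> z \<in> peirce_space tp 2 e}"
  shows "peirce_proj tp 0 e (tp y b c) + peirce_proj tp 2 e (tp y b c)
        = tp (peirce_proj tp 0 e y + peirce_proj tp 2 e y) b c"
proof -
  obtain b0 b2 where b: "b = b0 + b2" "tp e e b0 = 0 *\<^sub>R b0" "tp e e b2 = 1 *\<^sub>R b2"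
    using b unfolding ps0_iff ps2_iff by blast
  obtain c0 c2 where c: "c = c0 + c2" "tp e e c0 = 0 *\<^sub>R c0" "tp e e c2 = 1 *\<^sub>R c2"
    using c unfolding ps0_iff ps2_iff by blast
  have k1: "peirce_proj tp 0 e (tp y b0 c0) + peirce_proj tp 2 e (tp y b0 c0) = tp (peirce_proj tp 0 e y + peirce_proj tp 2 e y) b0 c0"
    by (rule KL1[OF t b(2) c(2)]) auto
  have k2: "peirce_proj tp 0 e (tp y b0 c2) + peirce_proj tp 2 e (tp y b0 c2) = tp (peirce_proj tp 0 e y + peirce_proj tp 2 e y) b0 c2"
    by (rule KL1[OF t b(2) c(3)]) auto
  have k3: "peirce_proj tp 0 e (tp y b2 c0) + peirce_proj tp 2 e (tp y b2 c0) = tp (peirce_proj tp 0 e y + peirce_proj tp 2 e y) b2 c0"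
    by (rule KL1[OF t b(3) c(2)]) auto
  have k4: "peirce_proj tp 0 e (tp y b2 c2) + peirce_proj tp 2 e (tp y b2 c2) = tp (peirce_proj tp 0 e y + peirce_proj tp 2 e y) b2 c2"
    by (rule KL1[OF t b(3) c(3)]) auto
  have ex: "tp y (b0 + b2) (c0 + c2) = tp y b0 c0 + tp y b0 c2 + tp y b2 c0 + tp y b2 c2" by (simp add: tpl)
  have ex2: "tp z (b0 + b2) (c0 + c2) = tp z b0 c0 + tp z b0 c2 + tp z b2 c0 + tp z b2 c2" for z by (simp add: tpl)
  show ?thesis using k1 k2 k3 k4 unfolding b(1) c(1) ex ex2 Rp_def[symmetric] Rp_add by simp
qed

lemma KL2S: assumes t: "tripotent tp e"
  and a: "a \<in> {y + z |y z. y \<in> peirce_space tp 0 e \<and> z \<in> peirce_space tp 2 e}"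
  and c: "c \<in> {y + z |y z. y \<in> peirce_space tp 0 e \<and> z \<in> peirce_space tp 2 e}"
  shows "peirce_proj tp 0 e (tp a y c) + peirce_proj tp 2 e (tp a y c)
        = tp a (peirce_proj tp 0 e y + peirce_proj tp 2 e y) c"
proof -
  obtain a0 a2 where a: "a = a0 + a2" "tp e e a0 = 0 *\<^sub>R a0" "tp e e a2 = 1 *\<^sub>R a2"
    using a unfolding ps0_iff ps2_iff by blast
  obtain c0 c2 where c: "c = c0 + c2" "tp e e c0 = 0 *\<^sub>R c0" "tp e e c2 = 1 *\<^sub>R c2"
    using c unfolding ps0_iff ps2_iff by blast
  have k1: "peirce_proj tp 0 e (tp a0 y c0) + peirce_proj tp 2 e (tp a0 y c0) = tp a0 (peirce_proj tp 0 e y + peirce_proj tp 2 e y) c0"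
    by (rule KL2[OF t a(2) c(2)]) auto
  have k2: "peirce_proj tp 0 e (tp a0 y c2) + peirce_proj tp 2 e (tp a0 y c2) = tp a0 (peirce_proj tp 0 e y + peirce_proj tp 2 e y) c2"
    by (rule KL2[OF t a(2) c(3)]) auto
  have k3: "peirce_proj tp 0 e (tp a2 y c0) + peirce_proj tp 2 e (tp a2 y c0) = tp a2 (peirce_proj tp 0 e y + peirce_proj tp 2 e y) c0"
    by (rule KL2[OF t a(3) c(2)]) auto
  have k4: "peirce_proj tp 0 e (tp a2 y c2) + peirce_proj tp 2 e (tp a2 y c2) = tp a2 (peirce_proj tp 0 e y + peirce_proj tp 2 e y) c2"
    by (rule KL2[OF t a(3) c(3)]) auto
  have ex: "tp (a0 + a2) y (c0 + c2) = tp a0 y c0 + tp a0 y c2 + tp a2 y c0 + tp a2 y c2" by (simp add: tpl)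
  have ex2: "tp (a0 + a2) z (c0 + c2) = tp a0 z c0 + tp a0 z c2 + tp a2 z c0 + tp a2 z c2" for z by (simp add: tpl)
  show ?thesis using k1 k2 k3 k4 unfolding a(1) c(1) ex ex2 Rp_def[symmetric] Rp_add by simp
qed

lemma a_to_b0: assumes T: "linear T" "clin J T" "tder T" and t: "tripotent tp e"
  and S: "S = {y + z |y z. y \<in> peirce_space tp 0 e \<and> z \<in> peirce_space tp 2 e}"
  shows "triple_derivation_on J tp S
                   (\<lambda>x. peirce_proj tp 0 e (T x) + peirce_proj tp 2 e (T x))"
  unfolding triple_derivation_on_def
proof (intro conjI ballI allI)
  fix x show "peirce_proj tp 0 e (T x) + peirce_proj tp 2 e (T x) \<in> S"
    using ppe[OF t] unfolding S ps0_iff ps2_iff by blast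
next
  fix x y show "peirce_proj tp 0 e (T (x + y)) + peirce_proj tp 2 e (T (x + y)) =
       peirce_proj tp 0 e (T x) + peirce_proj tp 2 e (T x) + (peirce_proj tp 0 e (T y) + peirce_proj tp 2 e (T y))"
    by (simp add: linear_add[OF T(1)] ppl algebra_simps)
next
  fix c x
  have "T (cscale J c x) = cscale J c (T x)" using T(2) unfolding clin_def by blast
  then show "peirce_proj tp 0 e (T (cscale J c x)) + peirce_proj tp 2 e (T (cscale J c x)) =
       cscale J c (peirce_proj tp 0 e (T x) + peirce_proj tp 2 e (T x))"
    by (simp add: pp_cs linear_add[OF cs_linear])
next
  fix a b c assume a: "a \<in> S" and b: "b \<in> S" and c: "c \<in> S"
  note a = a[unfolded S] and b = b[unfolded S] and c = c[unfolded S]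
  have d: "T (tp a b c) = tp (T a) b c + tp a (T b) c + tp a b (T c)" using T(3) unfolding tder_def by blast
  have e3: "peirce_proj tp 0 e (tp a b (T c)) + peirce_proj tp 2 e (tp a b (T c))
        = tp a b (peirce_proj tp 0 e (T c) + peirce_proj tp 2 e (T c))"
    using KL1S[OF t b a, of "T c"] by (metis tsym)
  show "peirce_proj tp 0 e (T (tp a b c)) + peirce_proj tp 2 e (T (tp a b c)) =
       tp (peirce_proj tp 0 e (T a) + peirce_proj tp 2 e (T a)) b c +
       tp a (peirce_proj tp 0 e (T b) + peirce_proj tp 2 e (T b)) c +
       tp a b (peirce_proj tp 0 e (T c) + peirce_proj tp 2 e (T c))"
    using KL1S[OF t b c, of "T a"] KL2S[OF t a c, of "T b"] e3
    unfolding d Rp_def[symmetric] Rp_add by simp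
qed

lemma a_to_b: assumes T: "linear T" "clin J T" "tder T" and t: "tripotent tp e"
  shows "triple_derivation_on J tp {y + z |y z. y \<in> peirce_space tp 0 e \<and> z \<in> peirce_space tp 2 e}
                   (\<lambda>x. peirce_proj tp 0 e (T x) + peirce_proj tp 2 e (T x))"
  by (rule a_to_b0[OF T t refl])

lemma P0_zero_on: assumes t: "tripotent tp e" and v: "tp e e v = l *\<^sub>R v" "l = 1/2 \<or> l = 1"
  shows "peirce_proj tp 0 e v = 0"
proof -
  have f: "1 - 3*l + 2*l^2 = (1 - l) * (1 - 2*l)" by (simp add: algebra_simps power2_eq_square)
  have "(1 - l) * (1 - 2*l) = 0" using v(2) by auto
  then have "1 - 3*l + 2*l^2 = 0" using f by simp
  then show ?thesis using pp_on_eig(3)[OF t v(1)] by simp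
qed

lemma a_to_c: assumes T: "linear T" "clin J T" "tder T" and t: "tripotent tp e"
  shows "triple_derivation_on J tp (peirce_space tp 2 e) (\<lambda>x. peirce_proj tp 2 e (T x))
                 \<and> peirce_proj tp 0 e (T e) = 0"
proof
  show "triple_derivation_on J tp (peirce_space tp 2 e) (\<lambda>x. peirce_proj tp 2 e (T x))"
    unfolding triple_derivation_on_def
  proof (intro conjI ballI allI)
    fix x show "peirce_proj tp 2 e (T x) \<in> peirce_space tp 2 e" using ppe(3)[OF t] unfolding ps2_iff by blast
  next
    fix x y show "peirce_proj tp 2 e (T (x + y)) = peirce_proj tp 2 e (T x) + peirce_proj tp 2 e (T y)"
      by (simp add: linear_add[OF T(1)] ppl)
  next
    fix c x
    have "T (cscale J c x) = cscale J c (T x)" using T(2) unfolding clin_def by blast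
    then show "peirce_proj tp 2 e (T (cscale J c x)) = cscale J c (peirce_proj tp 2 e (T x))"
      by (simp add: pp_cs)
  next
    fix a b c assume a: "a \<in> peirce_space tp 2 e" and b: "b \<in> peirce_space tp 2 e" and c: "c \<in> peirce_space tp 2 e"
    then have a': "tp e e a = a" and b': "tp e e b = b" and c': "tp e e c = c" unfolding ps2_iff by simp_all
    have d: "T (tp a b c) = tp (T a) b c + tp a (T b) c + tp a b (T c)" using T(3) unfolding tder_def by blast
    have e3: "peirce_proj tp 2 e (tp a b (T c)) = tp a b (peirce_proj tp 2 e (T c))"
      using KP1[OF t b' a', of "T c"] by (metis tsym)
    show "peirce_proj tp 2 e (T (tp a b c)) = tp (peirce_proj tp 2 e (T a)) b c +
       tp a (peirce_proj tp 2 e (T b)) c + tp a b (peirce_proj tp 2 e (T c))"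
      unfolding d using KP1[OF t b' c', of "T a"] KP2[OF t a' c', of "T b"] e3 by (simp add: ppl)
  qed
next
  have ee: "tp e e e = e" using t by (simp add: tripotent_def)
  let ?y = "T e"
  have "T e = tp ?y e e + tp e ?y e + tp e e ?y" using T(3) ee unfolding tder_def by metis
  then have Te: "T e = 2 *\<^sub>R tp e e ?y + tp e ?y e" by (simp add: scaleR_2 tsym[of ?y e e] algebra_simps)
  have q: "peirce_proj tp 0 e (tp e ?y e) = 0"
    by (rule P0_zero_on[OF t, of _ 1]) (use LQ[OF t] in simp_all)
  have "tp e e ?y = tp e e (peirce_proj tp 0 e ?y) + tp e e (peirce_proj tp 1 e ?y) + tp e e (peirce_proj tp 2 e ?y)"
    using decomp[of e ?y] by (metis add3)
  also have "\<dots> = (1/2) *\<^sub>R peirce_proj tp 1 e ?y + peirce_proj tp 2 e ?y" using ppe[OF t, of ?y] by simp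
  finally have l: "tp e e ?y = (1/2) *\<^sub>R peirce_proj tp 1 e ?y + peirce_proj tp 2 e ?y" .
  have z1: "peirce_proj tp 0 e (peirce_proj tp 1 e ?y) = 0" by (rule P0_zero_on[OF t ppe(2)[OF t]]) simp
  have z2: "peirce_proj tp 0 e (peirce_proj tp 2 e ?y) = 0" by (rule P0_zero_on[OF t ppe(3)[OF t]]) simp
  have "peirce_proj tp 0 e (T e) = peirce_proj tp 0 e (2 *\<^sub>R tp e e ?y + tp e ?y e)"
    using Te by (rule arg_cong)
  also have "\<dots> = 0" unfolding l using q z1 z2 by (simp add: ppl)
  finally show "peirce_proj tp 0 e (T e) = 0" .
qed

lemma zero_trip: "tripotent tp 0" by (simp add: tripotent_def tpl)

lemma S_zero: "{y + z |y z. y \<in> peirce_space tp 0 0 \<and> z \<in> peirce_space tp 2 0} = UNIV"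
proof -
  have "x \<in> peirce_space tp 0 0" for x by (simp add: peirce_space_def tpl)
  moreover have "(0::'a) \<in> peirce_space tp 2 0" by (simp add: peirce_space_def tpl)
  ultimately show ?thesis by force
qed

lemma R_zero: "peirce_proj tp 0 0 x + peirce_proj tp 2 0 x = x"
  by (simp add: peirce_proj_def tpl)

lemma b_to_a: assumes "clin J T"
  and h: "triple_derivation_on J tp {y + z |y z. y \<in> peirce_space tp 0 0 \<and> z \<in> peirce_space tp 2 0}
                   (\<lambda>x. peirce_proj tp 0 0 (T x) + peirce_proj tp 2 0 (T x))"
  shows "tder T"
proof -
  have "(\<lambda>x. peirce_proj tp 0 0 (T x) + peirce_proj tp 2 0 (T x)) = T" by (rule ext) (rule R_zero)
  then have "triple_derivation_on J tp UNIV T" using h unfolding S_zero by simp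
  then show ?thesis using tdo_UNIV[OF assms(1)] by blast
qed

end


context jbt begin

definition H :: "('a \<Rightarrow> 'a) \<Rightarrow> 'a \<Rightarrow> bool" where
  "H T u \<longleftrightarrow> triple_derivation_on J tp (peirce_space tp 2 u) (\<lambda>x. peirce_proj tp 2 u (T x))
                 \<and> peirce_proj tp 0 u (T u) = 0"

definition Dl :: "('a \<Rightarrow> 'a) \<Rightarrow> 'a \<Rightarrow> 'a \<Rightarrow> 'a \<Rightarrow> 'a" where
  "Dl T a b c = T (tp a b c) - tp (T a) b c - tp a (T b) c - tp a b (T c)"

lemma H_der: assumes "H T u" "tp u u a = a" "tp u u b = b" "tp u u c = c"
  shows "peirce_proj tp 2 u (T (tp a b c)) = tp (peirce_proj tp 2 u (T a)) b c
      + tp a (peirce_proj tp 2 u (T b)) c + tp a b (peirce_proj tp 2 u (T c))"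
proof -
  have "a \<in> peirce_space tp 2 u" "b \<in> peirce_space tp 2 u" "c \<in> peirce_space tp 2 u"
    using assms(2-4) unfolding ps2_iff by simp_all
  then show ?thesis using assms(1) unfolding H_def triple_derivation_on_def by blast
qed

lemma H_P0: "H T u \<Longrightarrow> peirce_proj tp 0 u (T u) = 0" unfolding H_def by blast

lemma orthD: "orth tp a b \<Longrightarrow> tp a b z = 0" unfolding orth_def by blast
lemma orthD': "orth tp a b \<Longrightarrow> tp z b a = 0" unfolding orth_def by (metis tsym)

lemma L_sum: assumes "orth tp a c" "orth tp c a"
  shows "tp (a + c) (a + c) w = tp a a w + tp c c w"
  using orthD[OF assms(1)] orthD[OF assms(2)] by (simp add: tpl)

lemma sum_facts: assumes a: "tripotent tp a" and c: "tripotent tp c" and o: "orth tp a c" "orth tp c a"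
  shows "tripotent tp (a + c)" "tp (a + c) (a + c) a = a" "tp (a + c) (a + c) c = c"
proof -
  have ac: "tp a a c = 0" using orthD'[OF o(2)] by metis
  have ca: "tp c c a = 0" using orthD'[OF o(1)] by metis
  show "tp (a + c) (a + c) a = a" using a ca unfolding L_sum[OF o] by (simp add: tripotent_def)
  moreover show "tp (a + c) (a + c) c = c" using c ac unfolding L_sum[OF o] by (simp add: tripotent_def)
  ultimately show "tripotent tp (a + c)" unfolding tripotent_def by (simp add: add3)
qed

lemma orth_sum: "orth tp a b \<Longrightarrow> orth tp c b \<Longrightarrow> orth tp (a + c) b"
  unfolding orth_def by (simp add: tpl)
lemma orth_sum': "orth tp b a \<Longrightarrow> orth tp b c \<Longrightarrow> orth tp b (a + c)"
  unfolding orth_def by (simp add: tpl)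

lemma mid_zero: assumes u: "tripotent tp u" and a: "tp u u a = a" and c: "tp u u c = c" and j: "j = 0 \<or> j = 1"
  shows "tp a (peirce_proj tp j u y) c = 0"
proof -
  have a': "tp u u a = 1 *\<^sub>R a" and c': "tp u u c = 1 *\<^sub>R c" using a c by simp_all
  show ?thesis using j
  proof
    assume "j = 0"
    then show ?thesis using eig_zero[OF u arith[OF a' ppe(1)[OF u] c']] by simp
  next
    assume "j = 1"
    then show ?thesis using eig_zero[OF u arith[OF a' ppe(2)[OF u] c']] by simp
  qed
qed

lemma mid_P2: assumes u: "tripotent tp u" and a: "tp u u a = a" and c: "tp u u c = c"
  shows "tp a y c = tp a (peirce_proj tp 2 u y) c"
  using split2[of a y c u] mid_zero[OF u a c, of 0 y] mid_zero[OF u a c, of 1 y] by simp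

lemma CDg: assumes u: "tripotent tp u" and h: "H T u" and lT: "linear T"
  and a: "tp u u a = a" and b: "tp u u b = b" and c: "tp u u c = c"
  and o1: "\<And>x. tp x b c = 0" and o2: "\<And>x. tp a b x = 0"
  shows "Dl T a b c = 0"
proof -
  have "peirce_proj tp 2 u (T (tp a b c)) = tp (peirce_proj tp 2 u (T a)) b c
      + tp a (peirce_proj tp 2 u (T b)) c + tp a b (peirce_proj tp 2 u (T c))"
    by (rule H_der[OF h a b c])
  then have "tp a (peirce_proj tp 2 u (T b)) c = 0" using o1 o2 by (simp add: linear_0[OF lT] ppl)
  then have "tp a (T b) c = 0" using mid_P2[OF u a c, of "T b"] by simp
  then show ?thesis unfolding Dl_def using o1 o2 by (simp add: linear_0[OF lT])
qed

lemma CDiag: assumes e: "tripotent tp e" and h: "H T e"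
  shows "Dl T e e e = 0"
proof -
  have ee: "tp e e e = e" using e by (simp add: tripotent_def)
  let ?y = "T e"
  let ?p0 = "peirce_proj tp 0 e ?y" and ?p1 = "peirce_proj tp 1 e ?y" and ?p2 = "peirce_proj tp 2 e ?y"
  have l2: "tp e e ?p2 = ?p2" using ppe(3)[OF e] by simp
  have "?p2 = tp ?p2 e e + tp e ?p2 e + tp e e ?p2" using H_der[OF h ee ee ee] ee by simp
  then have "tp e ?p2 e + ?p2 = 0" using l2 tsym[of ?p2 e e] by (simp add: algebra_simps)
  then have q2: "tp e ?p2 e = - ?p2" by (simp add: eq_neg_iff_add_eq_0)
  have "tp e e ?y = tp e e ?p0 + tp e e ?p1 + tp e e ?p2"
    using decomp[of e ?y] by (metis add3)
  also have "\<dots> = (1/2) *\<^sub>R ?p1 + ?p2" using ppe[OF e, of ?y] by simp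
  finally have l: "tp e e ?y = (1/2) *\<^sub>R ?p1 + ?p2" .
  have q: "tp e ?y e = - ?p2" using mid_P2[OF e ee ee, of ?y] q2 by simp
  have y0: "?p0 = 0" using H_P0[OF h] .
  have "Dl T e e e = ?y - tp e e ?y - tp e ?y e - tp e e ?y"
    unfolding Dl_def ee using tsym[of ?y e e] by simp
  also have "\<dots> = ?p0 + ?p1 + ?p2 - ((1/2) *\<^sub>R ?p1 + ?p2) + ?p2 - ((1/2) *\<^sub>R ?p1 + ?p2)"
    unfolding l q decomp by simp
  also have "\<dots> = ?p0 + (?p1 - (1/2) *\<^sub>R ?p1 - (1/2) *\<^sub>R ?p1)" by (simp add: algebra_simps)
  also have "?p1 - (1/2) *\<^sub>R ?p1 - (1/2) *\<^sub>R ?p1 = (1 - 1/2 - 1/2) *\<^sub>R ?p1"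
    by (simp only: scaleR_left_diff_distrib scaleR_one)
  also have "?p0 + (1 - 1/2 - 1/2) *\<^sub>R ?p1 = ?p0" by simp
  finally show ?thesis using y0 by simp
qed

lemma LL_comm: assumes "orth tp a c" "orth tp c a"
  shows "tp a a (tp c c z) = tp c c (tp a a z)"
proof -
  have ac: "tp a a c = 0" using orthD'[OF assms(2)] by metis
  have "tp a a (tp c c z) = tp c c (tp a a z) + tp (tp a a c) c z - tp c (tp a a c) z" by (rule JI)
  then show ?thesis using ac by (simp add: tpl)
qed

lemma pp_comm: assumes a: "tripotent tp a" and M: "linear M" and cm: "\<And>x. M (tp a a x) = tp a a (M x)"
  and j: "j = 0 \<or> j = 1 \<or> j = 2"
  shows "M (peirce_proj tp j a x) = peirce_proj tp j a (M x)"
  using j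
proof (elim disjE)
  assume j: "j = 0" then show ?thesis
    unfolding j pp0_I2[OF a] by (simp add: linear_diff[OF M] linear_add[OF M] linear_scale[OF M] cm)
next
  assume j: "j = 1" then show ?thesis
    unfolding j pp1_I2[OF a] by (simp add: linear_diff[OF M] linear_add[OF M] linear_scale[OF M] cm)
next
  assume j: "j = 2" then show ?thesis
    unfolding j pp2_I2[OF a] by (simp add: linear_diff[OF M] linear_add[OF M] linear_scale[OF M] cm)
qed

lemma CA: assumes a: "tripotent tp a" and c: "tripotent tp c" and o: "orth tp a c" "orth tp c a"
  and hu: "H T (a + c)" and hc: "H T c" and lT: "linear T"
  shows "Dl T a a c = 0"
proof -
  let ?u = "a + c"
  have u: "tripotent tp ?u" and ua: "tp ?u ?u a = a" and uc: "tp ?u ?u c = c" using sum_facts[OF a c o] by blast+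
  have ac: "tp a a c = 0" using orthD'[OF o(2)] by metis
  have ac2: "tp x a c = 0" for x using orthD'[OF o(2)] by metis
  have "peirce_proj tp 2 ?u (T (tp a a c)) = tp (peirce_proj tp 2 ?u (T a)) a c
      + tp a (peirce_proj tp 2 ?u (T a)) c + tp a a (peirce_proj tp 2 ?u (T c))"
    by (rule H_der[OF hu ua ua uc])
  then have d: "tp a (peirce_proj tp 2 ?u (T a)) c + tp a a (peirce_proj tp 2 ?u (T c)) = 0"
    using ac ac2 by (simp add: linear_0[OF lT] ppl)
  let ?z = "T c"
  have Lu: "tp ?u ?u w = tp a a w + tp c c w" for w by (rule L_sum[OF o])
  have lin_La: "linear (\<lambda>x. tp a a x)" by (rule lin3)
  have lin_Lc: "linear (\<lambda>x. tp c c x)" by (rule lin3)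
  have lin_Lu: "linear (\<lambda>x. tp ?u ?u x)" by (rule lin3)
  have i: "tp a a (peirce_proj tp 0 ?u ?z) = 0"
  proof -
    let ?y = "peirce_proj tp 0 ?u ?z"
    have yu: "tp ?u ?u ?y = 0" using ppe(1)[OF u] by simp
    have cm: "tp ?u ?u (tp a a x) = tp a a (tp ?u ?u x)" for x
      unfolding Lu using LL_comm[OF o, of x] by (simp add: tpl)
    have w: "tp ?u ?u (peirce_proj tp j a ?y) = 0" if "j = 0 \<or> j = 1 \<or> j = 2" for j
      using pp_comm[OF a lin_Lu cm that, of ?y] yu by (simp add: ppl)
    have w1: "peirce_proj tp 1 a ?y = 0"
    proof -
      have h: "tp c c (peirce_proj tp 1 a ?y) = (- 1/2) *\<^sub>R peirce_proj tp 1 a ?y"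
        using w[of 1] ppe(2)[OF a, of ?y] unfolding Lu by (simp add: algebra_simps eq_neg_iff_add_eq_0)
      show ?thesis by (rule eig_zero[OF c h]) simp_all
    qed
    have w2: "peirce_proj tp 2 a ?y = 0"
    proof -
      have h: "tp c c (peirce_proj tp 2 a ?y) = (- 1) *\<^sub>R peirce_proj tp 2 a ?y"
        using w[of 2] ppe(3)[OF a, of ?y] unfolding Lu by (simp add: algebra_simps eq_neg_iff_add_eq_0)
      show ?thesis by (rule eig_zero[OF c h]) simp_all
    qed
    have "?y = peirce_proj tp 0 a ?y" using decomp[of a ?y] w1 w2 by simp
    then show ?thesis using ppe(1)[OF a, of ?y] by simp
  qed
  have ii: "tp a a (peirce_proj tp 1 ?u ?z) = 0"
  proof -
    have z0: "peirce_proj tp 0 c ?z = 0" using H_P0[OF hc] .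
    have zs: "?z = peirce_proj tp 1 c ?z + peirce_proj tp 2 c ?z" using decomp[of c ?z] z0 by simp
    have cm: "tp c c (tp ?u ?u x) = tp ?u ?u (tp c c x)" for x
      unfolding Lu using LL_comm[OF o, of x] by (simp add: tpl)
    have v: "tp c c (peirce_proj tp 1 ?u x) = peirce_proj tp 1 ?u (tp c c x)" for x
      by (rule pp_comm[OF u lin_Lc cm]) simp
    have v1: "tp a a (peirce_proj tp 1 ?u (peirce_proj tp 1 c ?z)) = 0"
    proof -
      let ?v = "peirce_proj tp 1 ?u (peirce_proj tp 1 c ?z)"
      have "tp c c ?v = (1/2) *\<^sub>R ?v" unfolding v using ppe(2)[OF c, of ?z] by (simp add: ppl)
      moreover have "tp ?u ?u ?v = (1/2) *\<^sub>R ?v" using ppe(2)[OF u] by simp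
      ultimately show ?thesis unfolding Lu by simp
    qed
    have v2: "tp a a (peirce_proj tp 1 ?u (peirce_proj tp 2 c ?z)) = 0"
    proof -
      let ?v = "peirce_proj tp 1 ?u (peirce_proj tp 2 c ?z)"
      have "tp c c ?v = ?v" unfolding v using ppe(3)[OF c, of ?z] by (simp add: ppl)
      moreover have "tp ?u ?u ?v = (1/2) *\<^sub>R ?v" using ppe(2)[OF u] by simp
      ultimately have "tp a a ?v + ?v = (1/2) *\<^sub>R ?v" unfolding Lu by simp
      then have "tp a a ?v = (1/2) *\<^sub>R ?v - ?v" by (metis add_diff_cancel_right')
      also have "\<dots> = (1/2 - 1) *\<^sub>R ?v" by (simp only: scaleR_left_diff_distrib scaleR_one)
      finally have h: "tp a a ?v = (1/2 - 1) *\<^sub>R ?v" .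
      have "?v = 0" by (rule eig_zero[OF a h]) simp_all
      then show ?thesis by (simp add: tpl)
    qed
    show ?thesis using v1 v2 zs by (metis pp_add add3 add_0_right)
  qed
  have m: "tp a (T a) c = tp a (peirce_proj tp 2 ?u (T a)) c" by (rule mid_P2[OF u ua uc])
  have r: "tp a a ?z = tp a a (peirce_proj tp 2 ?u ?z)"
    using decomp[of ?u ?z] i ii by (metis add3 add_0)
  have "Dl T a a c = - (tp a (T a) c + tp a a ?z)"
    unfolding Dl_def using ac ac2 by (simp add: linear_0[OF lT])
  also have "\<dots> = 0" unfolding m r using d by simp
  finally show ?thesis .
qed

end


context jbt begin

lemma Dl_sym: "Dl T a b c = Dl T c b a"
  unfolding Dl_def tsym[of c b a] tsym[of "T c" b a] tsym[of c "T b" a] tsym[of c b "T a"]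
  by (simp add: algebra_simps)

lemma Dl_add1: "linear T \<Longrightarrow> Dl T (x + y) b d = Dl T x b d + Dl T y b d"
  unfolding Dl_def by (simp add: tpl linear_add algebra_simps)
lemma Dl_add2: "linear T \<Longrightarrow> Dl T a (x + y) d = Dl T a x d + Dl T a y d"
  unfolding Dl_def by (simp add: tpl linear_add algebra_simps)
lemma Dl_add3: "linear T \<Longrightarrow> Dl T a b (x + y) = Dl T a b x + Dl T a b y"
  unfolding Dl_def by (simp add: tpl linear_add algebra_simps)
lemma Dl_diff1: "linear T \<Longrightarrow> Dl T (x - y) b d = Dl T x b d - Dl T y b d"
  unfolding Dl_def by (simp add: tpl linear_diff algebra_simps)
lemma Dl_diff2: "linear T \<Longrightarrow> Dl T a (x - y) d = Dl T a x d - Dl T a y d"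
  unfolding Dl_def by (simp add: tpl linear_diff algebra_simps)
lemma Dl_diff3: "linear T \<Longrightarrow> Dl T a b (x - y) = Dl T a b x - Dl T a b y"
  unfolding Dl_def by (simp add: tpl linear_diff algebra_simps)
lemma Dl_zero1: "linear T \<Longrightarrow> Dl T 0 b d = 0"
  unfolding Dl_def by (simp add: tpl linear_0)

lemma cs1: "tp (cscale J c a) b d = cscale J c (tp a b d)" using cl1[of b d] unfolding clin_def by blast
lemma cs2: "tp a (cscale J c b) d = cscale J (cnj c) (tp a b d)" using cj2[of a d] unfolding conjlin_def by blast
lemma cs3: "tp a b (cscale J c d) = cscale J c (tp a b d)" using cs1 tsym by metis

lemma Dl_cs1: assumes "clin J T" shows "Dl T (cscale J c a) b d = cscale J c (Dl T a b d)"
proof -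
  have Tc: "T (cscale J c x) = cscale J c (T x)" for x using assms unfolding clin_def by blast
  show ?thesis unfolding Dl_def by (simp add: Tc cs1 linear_diff[OF cs_linear])
qed
lemma Dl_cs2: assumes "clin J T" shows "Dl T a (cscale J c b) d = cscale J (cnj c) (Dl T a b d)"
proof -
  have Tc: "T (cscale J c' x) = cscale J c' (T x)" for c' x using assms unfolding clin_def by blast
  show ?thesis unfolding Dl_def by (simp add: Tc cs1 cs2 cs3 linear_diff[OF cs_linear])
qed

lemma csJ: "cscale J \<i> x = J x" by (simp add: cscale_def)
lemma csmJ: "cscale J (cnj \<i>) x = - J x" by (simp add: cscale_def)

lemma Z1: assumes "finite F" "linear T" "clin J T" "\<forall>i\<in>F. Dl T (e i) b d = 0"
  shows "Dl T (\<Sum>i\<in>F. cscale J (c i) (e i)) b d = 0"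
  using assms
proof (induction F rule: finite_induct)
  case empty then show ?case by (simp add: Dl_zero1)
next
  case (insert i F)
  then show ?case by (simp add: Dl_add1 Dl_cs1 linear_0[OF cs_linear])
qed

lemma Z2: assumes "finite F" "linear T" "clin J T" "\<forall>i\<in>F. Dl T a (e i) d = 0"
  shows "Dl T a (\<Sum>i\<in>F. cscale J (c i) (e i)) d = 0"
  using assms
proof (induction F rule: finite_induct)
  case empty then show ?case unfolding Dl_def by (simp add: tpl linear_0)
next
  case (insert i F)
  then show ?case by (simp add: Dl_add2 Dl_cs2 linear_0[OF cs_linear])
qed

lemma Z3: assumes "finite F" "linear T" "clin J T" "\<forall>i\<in>F. Dl T a b (e i) = 0"
  shows "Dl T a b (\<Sum>i\<in>F. cscale J (c i) (e i)) = 0"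
proof -
  have "\<forall>i\<in>F. Dl T (e i) b a = 0" using assms(4) Dl_sym by simp
  then have "Dl T (\<Sum>i\<in>F. cscale J (c i) (e i)) b a = 0" by (rule Z1[OF assms(1-3)])
  then show ?thesis using Dl_sym by simp
qed

end


context jbt begin

lemma csmJ': "cscale J (- \<i>) x = - J x" by (simp add: cscale_def)

lemma family: assumes lT: "linear T" and hall: "\<forall>u. tripotent tp u \<longrightarrow> H T u"
  and tr: "\<forall>i\<in>F. tripotent tp (e i)" and orr: "\<forall>i\<in>F. \<forall>k\<in>F. i \<noteq> k \<longrightarrow> orth tp (e i) (e k)"
  and ijk: "i \<in> F" "j \<in> F" "k \<in> F"
  shows "Dl T (e i) (e j) (e k) = 0"
proof -
  have t: "tripotent tp (e m)" if "m \<in> F" for m using tr that by blast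
  have o: "orth tp (e m) (e n)" if "m \<in> F" "n \<in> F" "m \<noteq> n" for m n using orr that by blast
  have CAx: "Dl T (e m) (e m) (e n) = 0" if mn: "m \<in> F" "n \<in> F" "m \<noteq> n" for m n
  proof -
    have tm: "tripotent tp (e m)" using t mn by blast
    have tn: "tripotent tp (e n)" using t mn by blast
    have o1: "orth tp (e m) (e n)" using o mn by blast
    have o2: "orth tp (e n) (e m)" using o mn by blast
    have "tripotent tp (e m + e n)" using sum_facts[OF tm tn o1 o2] by blast
    then have h1: "H T (e m + e n)" using hall by blast
    have h2: "H T (e n)" using hall tn by blast
    show ?thesis by (rule CA[OF tm tn o1 o2 h1 h2 lT])
  qed
  show ?thesis
  proof (cases "i = j")
    case ij: True
    show ?thesis
    proof (cases "j = k")
      case True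
      have ti: "tripotent tp (e i)" using t ijk by blast
      then have "H T (e i)" using hall by blast
      then show ?thesis using ij True CDiag[OF ti] by simp
    next
      case False
      then show ?thesis using ij CAx[of j k] ijk by blast
    qed
  next
    case ij: False
    show ?thesis
    proof (cases "j = k")
      case True
      have "Dl T (e j) (e j) (e i) = 0" using CAx[of j i] ijk ij by blast
      then show ?thesis using True Dl_sym[of T "e i" "e j" "e j"] by simp
    next
      case jk: False
      show ?thesis
      proof (cases "i = k")
        case True
        note f = sum_facts[OF t[OF ijk(1)] t[OF ijk(2)] o[OF ijk(1,2) ij] o[OF ijk(2,1)]] 
        have ii: "tp (e i + e j) (e i + e j) (e i) = e i" using f ij by blast
        have jj: "tp (e i + e j) (e i + e j) (e j) = e j" using f ij by blast
        show ?thesis unfolding True[symmetric]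
        proof (rule CDg[OF _ _ lT ii jj ii])
          show "tripotent tp (e i + e j)" using f ij by blast
          then show "H T (e i + e j)" using hall by blast
          show "tp x (e j) (e i) = 0" for x using orthD'[OF o[OF ijk(1,2) ij]] .
          show "tp (e i) (e j) x = 0" for x using orthD[OF o[OF ijk(1,2) ij]] .
        qed
      next
        case ik: False
        have oij: "orth tp (e i) (e j)" "orth tp (e j) (e i)" using o ijk ij by auto
        have oik: "orth tp (e i) (e k)" "orth tp (e k) (e i)" using o ijk ik by auto
        have ojk: "orth tp (e j) (e k)" "orth tp (e k) (e j)" using o ijk jk by auto
        note f1 = sum_facts[OF t[OF ijk(1)] t[OF ijk(2)] oij]
        have o2: "orth tp (e i + e j) (e k)" "orth tp (e k) (e i + e j)"
          using orth_sum[OF oik(1) ojk(1)] orth_sum'[OF oik(2) ojk(2)] by auto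
        note f2 = sum_facts[OF f1(1) t[OF ijk(3)] o2]
        let ?u = "e i + e j + e k"
        have Lu: "tp ?u ?u w = tp (e i + e j) (e i + e j) w + tp (e k) (e k) w" for w by (rule L_sum[OF o2])
        have ui: "tp ?u ?u (e i) = e i"
          unfolding Lu using f1(2) orthD'[OF oik(1)] by simp
        have uj: "tp ?u ?u (e j) = e j"
          unfolding Lu using f1(3) orthD'[OF ojk(1)] by simp
        have uk: "tp ?u ?u (e k) = e k" using f2(3) .
        show ?thesis
        proof (rule CDg[OF f2(1) _ lT ui uj uk])
          show "H T ?u" using hall f2(1) by blast
          show "tp x (e j) (e k) = 0" for x using orthD'[OF ojk(2)] .
          show "tp (e i) (e j) x = 0" for x using orthD[OF oij(1)] .
        qed
      qed
    qed
  qed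
qed

lemma fam_zero: assumes lT: "linear T" and cT: "clin J T" and hall: "\<forall>u. tripotent tp u \<longrightarrow> H T u"
  and fin: "finite F" and tr: "\<forall>i\<in>F. tripotent tp (e i)" and orr: "\<forall>i\<in>F. \<forall>k\<in>F. i \<noteq> k \<longrightarrow> orth tp (e i) (e k)"
  shows "Dl T (\<Sum>i\<in>F. cscale J (c i) (e i)) (\<Sum>i\<in>F. cscale J (c i) (e i)) (\<Sum>i\<in>F. cscale J (c i) (e i)) = 0"
proof -
  let ?x = "\<Sum>i\<in>F. cscale J (c i) (e i)"
  have s1: "Dl T ?x (e j) (e k) = 0" if "j \<in> F" "k \<in> F" for j k
    by (rule Z1[OF fin lT cT]) (use family[OF lT hall tr orr _ that] in blast)
  have s2: "Dl T ?x ?x (e k) = 0" if "k \<in> F" for k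
    by (rule Z2[OF fin lT cT]) (use s1 that in blast)
  show ?thesis by (rule Z3[OF fin lT cT]) (use s2 in blast)
qed

lemma cont_Dl: assumes "bounded_linear T" shows "continuous_on UNIV (\<lambda>x. Dl T x x x)"
proof -
  have cT: "continuous_on UNIV T" using assms by (rule linear_continuous_on)
  have ct: "continuous_on UNIV (\<lambda>x. tp (f x) (g x) (h x))"
    if "continuous_on UNIV f" "continuous_on UNIV g" "continuous_on UNIV h" for f g h :: "'a \<Rightarrow> 'a"
  proof -
    have "continuous_on UNIV (\<lambda>x. (\<lambda>(a, b, c). tp a b c) (f x, g x, h x))"
      by (rule continuous_on_compose2[OF tcont]) (auto intro!: continuous_on_Pair that)
    then show ?thesis by simp
  qed
  have cid: "continuous_on UNIV (\<lambda>x::'a. x)" by (rule continuous_on_id)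
  have cT': "continuous_on UNIV (\<lambda>x. T (tp x x x))"
    by (rule continuous_on_compose2[OF cT ct[OF cid cid cid]]) auto
  show ?thesis unfolding Dl_def
    by (intro continuous_on_diff cT' ct cid cT)
qed

lemma polar: assumes lT: "linear T" and cT: "clin J T" and z: "\<And>x. Dl T x x x = 0"
  shows "Dl T a b c = 0"
proof -
  have A: "Dl T b a a + Dl T a b a + Dl T b a a = 0" for a b
  proof -
    have e1: "Dl T (a + b) (a + b) (a + b) = Dl T a a a + Dl T b a a + Dl T a b a + Dl T a a b
       + Dl T b b a + Dl T b a b + Dl T a b b + Dl T b b b"
      by (simp add: Dl_add1[OF lT] Dl_add2[OF lT] Dl_add3[OF lT] algebra_simps)
    have e2: "Dl T (a - b) (a - b) (a - b) = Dl T a a a - Dl T b a a - Dl T a b a - Dl T a a b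
       + Dl T b b a + Dl T b a b + Dl T a b b - Dl T b b b"
      by (simp add: Dl_diff1[OF lT] Dl_diff2[OF lT] Dl_diff3[OF lT] algebra_simps)
    have "Dl T (a + b) (a + b) (a + b) - Dl T (a - b) (a - b) (a - b)
        = 2 *\<^sub>R (Dl T b a a + Dl T a b a + Dl T a a b) + 2 *\<^sub>R Dl T b b b + 2 *\<^sub>R Dl T a a a - 2 *\<^sub>R Dl T a a a"
      unfolding e1 e2 by (simp add: algebra_simps scaleR_2)
    then have "2 *\<^sub>R (Dl T b a a + Dl T a b a + Dl T a a b) = 0" using z by simp
    then show ?thesis using Dl_sym[of T a a b] by simp
  qed
  have X: "Dl T b a a = 0" for a b
  proof -
    have j1: "Dl T (J b) a a = J (Dl T b a a)" using Dl_cs1[OF cT, of \<i> b a a] by (simp add: csJ)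
    have j2: "Dl T a (J b) a = - J (Dl T a b a)" using Dl_cs2[OF cT, of a \<i> b a] by (simp add: csJ csmJ')
    have "J (Dl T b a a) - J (Dl T a b a) + J (Dl T b a a) = 0" using A[where a=a and b="J b"] j1 j2 by simp
    then have "J (Dl T b a a - Dl T a b a + Dl T b a a) = 0" by (simp add: linear_add[OF J_lin] linear_diff[OF J_lin])
    then have n: "Dl T b a a - Dl T a b a + Dl T b a a = 0" by (rule J_zero)
    have "(Dl T b a a - Dl T a b a + Dl T b a a) + (Dl T b a a + Dl T a b a + Dl T b a a) = 0"
      using n A[where a=a and b=b] by simp
    then have "2 *\<^sub>R (2 *\<^sub>R Dl T b a a) = 0" by (simp add: algebra_simps scaleR_2)
    then show ?thesis by simp
  qed
  have U: "Dl T a c b = 0" for a b c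
  proof -
    have s: "Dl T a c b + Dl T c a b = 0" for a c
    proof -
      have "Dl T (a + c) (a + c) b = Dl T a a b + Dl T a c b + Dl T c a b + Dl T c c b"
        by (simp add: Dl_add1[OF lT] Dl_add2[OF lT] algebra_simps)
      moreover have "Dl T (a + c) (a + c) b = 0" using X[where a="a + c" and b=b] Dl_sym[of T "a + c" "a + c" b] by simp
      moreover have "Dl T a a b = 0" using X[where a=a and b=b] Dl_sym[of T a a b] by simp
      moreover have "Dl T c c b = 0" using X[where a=c and b=b] Dl_sym[of T c c b] by simp
      ultimately show ?thesis by (simp add: add.assoc)
    qed
    have j1: "Dl T (J c) a b = J (Dl T c a b)" using Dl_cs1[OF cT, of \<i> c a b] by (simp add: csJ)
    have j2: "Dl T a (J c) b = - J (Dl T a c b)" using Dl_cs2[OF cT, of a \<i> c b] by (simp add: csJ csmJ')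
    have "- J (Dl T a c b) + J (Dl T c a b) = 0" using s[where a=a and c="J c"] j1 j2 by simp
    then have "J (Dl T c a b - Dl T a c b) = 0" by (simp add: linear_diff[OF J_lin] algebra_simps)
    then have d: "Dl T c a b - Dl T a c b = 0" by (rule J_zero)
    have "(Dl T a c b + Dl T c a b) - (Dl T c a b - Dl T a c b) = 0" using s[where a=a and c=c] d by simp
    then have "2 *\<^sub>R Dl T a c b = 0" by (simp add: algebra_simps scaleR_2)
    then show ?thesis by simp
  qed
  show ?thesis by (rule U)
qed

lemma c_to_a: assumes nt: "norm_total_tripotents J tp" and bT: "bounded_linear T" and cT: "clin J T"
  and hall: "\<forall>u. tripotent tp u \<longrightarrow> H T u"
  shows "tder T"
proof -
  have lT: "linear T" using bT by (rule bounded_linear.linear)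
  let ?M = "{(\<Sum>i\<in>F. cscale J (c i) (e i)) | F c e.
        finite (F :: nat set) \<and> (\<forall>i\<in>F. tripotent tp (e i))
        \<and> (\<forall>i\<in>F. \<forall>k\<in>F. i \<noteq> k \<longrightarrow> orth tp (e i) (e k))}"
  have M: "?M \<subseteq> {x. Dl T x x x = 0}"
  proof
    fix x assume "x \<in> ?M"
    then obtain F c e where x: "x = (\<Sum>i\<in>F. cscale J (c i) (e i))" and F: "finite (F :: nat set)"
      "\<forall>i\<in>F. tripotent tp (e i)" "\<forall>i\<in>F. \<forall>k\<in>F. i \<noteq> k \<longrightarrow> orth tp (e i) (e k)" by blast
    show "x \<in> {x. Dl T x x x = 0}" unfolding x using fam_zero[OF lT cT hall F] by simp
  qed
  have cl: "closed {x. Dl T x x x = 0}"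
    using closed_Collect_eq[OF cont_Dl[OF bT] continuous_on_const] by simp
  have "closure ?M \<subseteq> {x. Dl T x x x = 0}" by (rule closure_minimal[OF M cl])
  moreover have "UNIV \<subseteq> closure ?M" using nt unfolding norm_total_tripotents_def .
  ultimately have z: "Dl T x x x = 0" for x by blast
  have "Dl T a b c = 0" for a b c by (rule polar[OF lT cT z])
  then show ?thesis unfolding tder_def Dl_def by (simp add: algebra_simps)
qed

end

theorem mainTheorem3:
  fixes J :: "'a::banach \<Rightarrow> 'a" and tp :: "'a \<Rightarrow> 'a \<Rightarrow> 'a \<Rightarrow> 'a" and T :: "'a \<Rightarrow> 'a"
  assumes "JBstar_triple J tp"
    and "norm_total_tripotents J tp"
    and "bounded_linear T" and "clin J T"
  shows "(triple_derivation_on J tp UNIV T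
          \<longleftrightarrow> (\<forall>e. tripotent tp e \<longrightarrow>
                 triple_derivation_on J tp
                   {y + z | y z. y \<in> peirce_space tp 0 e \<and> z \<in> peirce_space tp 2 e}
                   (\<lambda>x. peirce_proj tp 0 e (T x) + peirce_proj tp 2 e (T x))))
       \<and> (triple_derivation_on J tp UNIV T
          \<longleftrightarrow> (\<forall>e. tripotent tp e \<longrightarrow>
                 triple_derivation_on J tp (peirce_space tp 2 e) (\<lambda>x. peirce_proj tp 2 e (T x))
                 \<and> peirce_proj tp 0 e (T e) = 0))"
proof -
  interpret jbt J tp by (rule jbt.intro) (rule assms(1))
  have lT: "linear T" using assms(3) by (rule bounded_linear.linear)
  have eq: "triple_derivation_on J tp UNIV T \<longleftrightarrow> tder T" by (rule tdo_UNIV[OF assms(4)])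
  have P1: "tder T \<longleftrightarrow> (\<forall>e. tripotent tp e \<longrightarrow>
                 triple_derivation_on J tp
                   {y + z | y z. y \<in> peirce_space tp 0 e \<and> z \<in> peirce_space tp 2 e}
                   (\<lambda>x. peirce_proj tp 0 e (T x) + peirce_proj tp 2 e (T x)))"
  proof
    assume "tder T"
    then show "\<forall>e. tripotent tp e \<longrightarrow>
                 triple_derivation_on J tp
                   {y + z | y z. y \<in> peirce_space tp 0 e \<and> z \<in> peirce_space tp 2 e}
                   (\<lambda>x. peirce_proj tp 0 e (T x) + peirce_proj tp 2 e (T x))"
      using a_to_b[OF lT assms(4)] by blast
  next
    assume h: "\<forall>e. tripotent tp e \<longrightarrow>
                 triple_derivation_on J tp
                   {y + z | y z. y \<in> peirce_space tp 0 e \<and> z \<in> peirce_space tp 2 e}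
                   (\<lambda>x. peirce_proj tp 0 e (T x) + peirce_proj tp 2 e (T x))"
    then have "triple_derivation_on J tp
                   {y + z | y z. y \<in> peirce_space tp 0 0 \<and> z \<in> peirce_space tp 2 0}
                   (\<lambda>x. peirce_proj tp 0 0 (T x) + peirce_proj tp 2 0 (T x))"
      using zero_trip by blast
    then show "tder T" by (rule b_to_a[OF assms(4)])
  qed
  have P2: "tder T \<longleftrightarrow> (\<forall>e. tripotent tp e \<longrightarrow>
                 triple_derivation_on J tp (peirce_space tp 2 e) (\<lambda>x. peirce_proj tp 2 e (T x))
                 \<and> peirce_proj tp 0 e (T e) = 0)"
  proof
    assume "tder T"
    then show "\<forall>e. tripotent tp e \<longrightarrow>
                 triple_derivation_on J tp (peirce_space tp 2 e) (\<lambda>x. peirce_proj tp 2 e (T x))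
                 \<and> peirce_proj tp 0 e (T e) = 0"
      using a_to_c[OF lT assms(4)] by blast
  next
    assume h: "\<forall>e. tripotent tp e \<longrightarrow>
                 triple_derivation_on J tp (peirce_space tp 2 e) (\<lambda>x. peirce_proj tp 2 e (T x))
                 \<and> peirce_proj tp 0 e (T e) = 0"
    then have "\<forall>u. tripotent tp u \<longrightarrow> H T u" unfolding H_def by blast
    then show "tder T" by (rule c_to_a[OF assms(2) assms(3) assms(4)])
  qed
  show ?thesis using eq P1 P2 by blast
qed

end
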